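(* For every $d\ge1$, $$I_d\le\left\lfloor\left(\frac4\pi\right)^{d/2}\Gamma\!\left(\frac d2+1\right)\right\rfloor.$$
   Context: A lattice is well-rounded if its minimal vectors (nonzero vectors of minimal length) span $\Lambda\otimes\mathbb R$. $I_d$ is the smallest integer such that whenever $\Lambda$ is a $d$-dimensional Euclidean lattice and $\Lambda'\subseteq\Lambda$ is a $d$-dimensional well-rounded sublattice whose minimal vectors are all minimal vectors of $\Lambda$, the index $[\Lambda:\Lambda']$ is at most $I_d$. *)

theory Defs
  imports "HOL-Analysis.Analysis"
begin

definition is_lattice :: "'a::euclidean_space set \<Rightarrow> bool" where
  "is_lattice L \<longleftrightarrow> (\<exists>B. independent B \<and> span B = UNIV \<and>
      L = {(\<Sum>b\<in>B. of_int (c b) *\<^sub>R b) | c. True})"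

definition min_vecs :: "'a::euclidean_space set \<Rightarrow> 'a set" where
  "min_vecs L = {v \<in> L. v \<noteq> 0 \<and> (\<forall>w\<in>L. w \<noteq> 0 \<longrightarrow> norm v \<le> norm w)}"

text \<open>Well-rounded: minimal vectors span L \<otimes> R (= the whole space for a full-rank lattice).\<close>
definition well_rounded :: "'a::euclidean_space set \<Rightarrow> bool" where
  "well_rounded L \<longleftrightarrow> span (min_vecs L) = UNIV"

definition lattice_index :: "'a::euclidean_space set \<Rightarrow> 'a set \<Rightarrow> nat" where
  "lattice_index L L' = card ((\<lambda>x. (\<lambda>y. x + y) ` L') ` L)"

definition I_bound :: "'a::euclidean_space itself \<Rightarrow> enat" where
  "I_bound _ = Sup {enat (lattice_index L L') | (L::'a set) L'.
      is_lattice L \<and> is_lattice L' \<and> L' \<subseteq> L \<and> well_rounded L' \<and> min_vecs L' \<subseteq> min_vecs L}"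

end

theory Submission
  imports Defs
begin

lemma lattice_mem:
  assumes "L = {(\<Sum>b\<in>B. of_int (c b) *\<^sub>R b) | c. True}"
  shows "x \<in> L \<longleftrightarrow> (\<exists>c. x = (\<Sum>b\<in>B. of_int (c b) *\<^sub>R b))"
  using assms by auto

lemma lattice_obtain:
  assumes "is_lattice L"
  obtains B where "L = {(\<Sum>b\<in>B. of_int (c b) *\<^sub>R b) | c. True}"
proof -
  from assms have "\<exists>B. independent B \<and> span B = UNIV \<and> L = {(\<Sum>b\<in>B. of_int (c b) *\<^sub>R b) | c. True}"
    by (simp only: is_lattice_def)
  then obtain B where "independent B \<and> span B = UNIV \<and> L = {(\<Sum>b\<in>B. of_int (c b) *\<^sub>R b) | c. True}"
    by (erule exE)
  then show ?thesis using that by (elim conjE)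
qed

lemma lattice_add:
  assumes "is_lattice L" "x \<in> L" "y \<in> L" shows "x + y \<in> L"
proof -
  obtain B where L: "L = {(\<Sum>b\<in>B. of_int (c b) *\<^sub>R b) | c. True}"
    using assms(1) by (rule lattice_obtain)
  obtain c where c: "x = (\<Sum>b\<in>B. of_int (c b) *\<^sub>R b)"
    using lattice_mem[OF L, THEN iffD1, OF assms(2)] by blast
  obtain c' where c': "y = (\<Sum>b\<in>B. of_int (c' b) *\<^sub>R b)"
    using lattice_mem[OF L, THEN iffD1, OF assms(3)] by blast
  have "\<exists>cc. x + y = (\<Sum>b\<in>B. of_int (cc b) *\<^sub>R b)"
    by (rule exI[of _ "\<lambda>b. c b + c' b"]) (simp add: c c' scaleR_add_left sum.distrib)
  then show ?thesis by (rule lattice_mem[OF L, THEN iffD2])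
qed

lemma lattice_scale:
  assumes "is_lattice L" "x \<in> L" shows "of_int z *\<^sub>R x \<in> L"
proof -
  obtain B where L: "L = {(\<Sum>b\<in>B. of_int (c b) *\<^sub>R b) | c. True}"
    using assms(1) by (rule lattice_obtain)
  obtain c where c: "x = (\<Sum>b\<in>B. of_int (c b) *\<^sub>R b)"
    using lattice_mem[OF L, THEN iffD1, OF assms(2)] by blast
  have "\<exists>cc. of_int z *\<^sub>R x = (\<Sum>b\<in>B. of_int (cc b) *\<^sub>R b)"
    by (rule exI[of _ "\<lambda>b. z * c b"]) (simp add: c scaleR_sum_right)
  then show ?thesis by (rule lattice_mem[OF L, THEN iffD2])
qed

lemma lattice_zero: assumes "is_lattice L" shows "0 \<in> L"
proof -
  obtain B where L: "L = {(\<Sum>b\<in>B. of_int (c b) *\<^sub>R b) | c. True}"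
    using assms(1) by (rule lattice_obtain)
  have "\<exists>cc. 0 = (\<Sum>b\<in>B. of_int (cc b) *\<^sub>R b)"
    by (rule exI[of _ "\<lambda>_. 0"]) simp
  then show ?thesis by (rule lattice_mem[OF L, THEN iffD2])
qed

lemma lattice_diff:
  assumes "is_lattice L" "x \<in> L" "y \<in> L" shows "x - y \<in> L"
proof -
  have "of_int (-1) *\<^sub>R y \<in> L" by (rule lattice_scale[OF assms(1,3)])
  then have "x + (of_int (-1) *\<^sub>R y) \<in> L" by (rule lattice_add[OF assms(1,2)])
  then show ?thesis by simp
qed

lemma lattice_sum:
  assumes "is_lattice L" "finite I" "\<And>i. i \<in> I \<Longrightarrow> f i \<in> L" shows "sum f I \<in> L"
  using assms(2,3)
proof (induction I rule: finite_induct)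
  case empty then show ?case using lattice_zero[OF assms(1)] by simp
next
  case (insert a I) then show ?case using lattice_add[OF assms(1)] by simp
qed


lemma gram_schmidt_tri:
  fixes v :: "nat \<Rightarrow> 'a::euclidean_space"
  assumes indep: "independent (v ` {..<d})" and inj: "inj_on v {..<d}"
  obtains u a where "\<And>i j. i < d \<Longrightarrow> j < d \<Longrightarrow> u i \<bullet> u j = (if i = j then 1 else 0)"
    "\<And>i j. i < j \<Longrightarrow> j < d \<Longrightarrow> v i \<bullet> u j = 0"
    "\<And>i. i < d \<Longrightarrow> v i \<bullet> u i = a i"  "\<And>i. i < d \<Longrightarrow> a i > 0"
    "\<And>i. i < d \<Longrightarrow> a i \<le> norm (v i)"
proof -
  have "\<forall>i. \<exists>y z. y \<in> span (v`{..<i}) \<and> (\<forall>w\<in>span (v`{..<i}). orthogonal z w) \<and> v i = y + z"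
    by (metis orthogonal_subspace_decomp_exists)
  then obtain Y Z where Y: "\<And>i. Y i \<in> span (v`{..<i})"
    and Z: "\<And>i w. w \<in> span (v`{..<i}) \<Longrightarrow> orthogonal (Z i) w"
    and YZ: "\<And>i. v i = Y i + Z i" by metis
  have Znz: "Z i \<noteq> 0" if "i < d" for i
  proof
    assume "Z i = 0"
    then have vi: "v i \<in> span (v`{..<i})" using Y YZ by simp
    have "independent (insert (v i) (v`{..<i}))"
      by (rule independent_mono[OF indep]) (use that in auto)
    moreover have "v i \<notin> v`{..<i}" using inj that unfolding inj_on_def by (metis imageE lessThan_iff less_trans less_irrefl)
    ultimately show False using vi by (simp add: independent_insert)
  qed
  have vZ: "v i \<bullet> Z j = 0" if "i < j" for i j
  proof -
    have "v i \<in> span (v`{..<j})" using that by (intro span_base) auto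
    then show ?thesis using Z[of "v i" j] by (simp add: orthogonal_def inner_commute)
  qed
  have ZZ: "Z i \<bullet> Z j = 0" if "i < j" for i j
  proof -
    have "v i \<in> span (v`{..<j})" using that by (intro span_base) auto
    moreover have "Y i \<in> span (v`{..<j})"
    proof -
      have "v`{..<i} \<subseteq> v`{..<j}" using that by auto
      then show ?thesis using Y[of i] span_mono by blast
    qed
    ultimately have "Z i \<in> span (v`{..<j})" using YZ[of i]
      by (metis add_diff_cancel_left' span_diff)
    then show ?thesis using Z[of "Z i" j] by (simp add: orthogonal_def inner_commute)
  qed
  have vZZ: "v i \<bullet> Z i = Z i \<bullet> Z i" for i
  proof -
    have "Y i \<bullet> Z i = 0" using Z[OF Y[of i]] by (simp add: orthogonal_def inner_commute)
    then show ?thesis by (simp add: YZ[of i] inner_add_left)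
  qed
  have nv: "norm (Z i) \<le> norm (v i)" for i
  proof -
    have "Y i \<bullet> Z i = 0" using Z[OF Y[of i]] by (simp add: orthogonal_def inner_commute)
    then have "(norm (v i))\<^sup>2 = (norm (Y i))\<^sup>2 + (norm (Z i))\<^sup>2"
      by (simp add: YZ[of i] norm_add_Pythagorean orthogonal_def)
    then have "(norm (Z i))\<^sup>2 \<le> (norm (v i))\<^sup>2" by simp
    then show ?thesis by (simp add: power2_le_iff_abs_le) 
  qed
  define u where "u i = Z i /\<^sub>R norm (Z i)" for i
  define a where "a i = norm (Z i)" for i
  show ?thesis
  proof (rule that[of u a])
    fix i j assume ij: "i < d" "j < d"
    show "u i \<bullet> u j = (if i = j then 1 else 0)"
    proof (cases "i = j")
      case True
      then show ?thesis using Znz[OF ij(1)] by (simp add: u_def inner_commute dot_square_norm power2_eq_square)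
    next
      case False
      then have "Z i \<bullet> Z j = 0" using ZZ[of i j] ZZ[of j i] by (cases "i < j") (auto simp: inner_commute)
      then show ?thesis using False by (simp add: u_def)
    qed
  next
    fix i j assume "i < j" "j < d" then show "v i \<bullet> u j = 0" using vZ by (simp add: u_def)
  next
    fix i assume "i < d" then show "v i \<bullet> u i = a i" using Znz[of i]
      by (simp add: u_def a_def vZZ dot_square_norm power2_eq_square)
  next
    fix i assume "i < d" then show "a i > 0" using Znz by (simp add: a_def)
  next
    fix i assume "i < d" then show "a i \<le> norm (v i)" using nv by (simp add: a_def)
  qed
qed


lemma frame_iso:
  fixes u e :: "nat \<Rightarrow> 'a::euclidean_space"
  assumes orth: "\<And>i j. i < d \<Longrightarrow> j < d \<Longrightarrow> u i \<bullet> u j = (if i = j then 1 else 0)"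
    and dd: "d = DIM('a)" and e: "bij_betw e {..<d} Basis"
  defines "g \<equiv> \<lambda>x. \<Sum>j<d. (x \<bullet> u j) *\<^sub>R e j"
  shows "\<And>x l. l < d \<Longrightarrow> g x \<bullet> e l = x \<bullet> u l"
    and "\<And>x y. norm (g x - g y) = norm (x - y)"
proof -
  have ee: "e i \<bullet> e j = (if i = j then 1 else 0)" if "i < d" "j < d" for i j
  proof -
    have "e i \<in> Basis" "e j \<in> Basis" using e that by (auto simp: bij_betw_def)
    moreover have "e i = e j \<longleftrightarrow> i = j" using e that by (auto simp: bij_betw_def inj_on_def)
    ultimately show ?thesis by (simp add: inner_Basis)
  qed
  show G1: "g x \<bullet> e l = x \<bullet> u l" if "l < d" for x l
  proof -
    have "g x \<bullet> e l = (\<Sum>j<d. (x \<bullet> u j) * (if j = l then 1 else 0))"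
      unfolding g_def inner_sum_left using ee that by (intro sum.cong) auto
    also have "\<dots> = x \<bullet> u l" using that by (simp add: if_distrib cong: if_cong)
    finally show ?thesis .
  qed
  have uinj: "inj_on u {..<d}"
    using orth unfolding inj_on_def by (metis lessThan_iff one_neq_zero)
  have span: "span (u ` {..<d}) = UNIV"
  proof -
    have "pairwise orthogonal (u ` {..<d})"
      unfolding pairwise_def orthogonal_def using orth by auto
    moreover have "0 \<notin> u ` {..<d}" using orth by force
    ultimately have ind: "independent (u ` {..<d})" by (rule pairwise_orthogonal_independent)
    have "card (u ` {..<d}) = d" using uinj by (simp add: card_image)
    then have "UNIV \<subseteq> span (u ` {..<d})"
      using card_ge_dim_independent[of "u ` {..<d}" UNIV] ind dd by simp
    then show ?thesis by auto
  qed
  have expand: "z = (\<Sum>j<d. (z \<bullet> u j) *\<^sub>R u j)" for z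
  proof -
    define r where "r = z - (\<Sum>j<d. (z \<bullet> u j) *\<^sub>R u j)"
    have ru: "r \<bullet> u l = 0" if "l < d" for l
    proof -
      have "(\<Sum>j<d. (z \<bullet> u j) *\<^sub>R u j) \<bullet> u l = (\<Sum>j<d. (z \<bullet> u j) * (if j = l then 1 else 0))"
        unfolding inner_sum_left using orth that by (intro sum.cong) auto
      also have "\<dots> = z \<bullet> u l" using that by (simp add: if_distrib cong: if_cong)
      finally show ?thesis by (simp add: r_def inner_diff_left)
    qed
    have "orthogonal r r"
      by (rule orthogonal_to_span[of r "u ` {..<d}"]) (use span ru in \<open>auto simp: orthogonal_def inner_commute\<close>)
    then have "r = 0" by (simp add: orthogonal_self)
    then show ?thesis by (simp add: r_def)
  qed
  have nz: "norm (g z) = norm z" for z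
  proof -
    have gz: "g z = (\<Sum>j<d. (z \<bullet> u j) *\<^sub>R e j)" by (simp add: g_def)
    have "g z \<bullet> g z = (\<Sum>j<d. (z \<bullet> u j) *\<^sub>R e j) \<bullet> g z" by (subst gz) (rule refl)
    also have "\<dots> = (\<Sum>j<d. (z \<bullet> u j) * (e j \<bullet> g z))"
      by (simp add: inner_sum_left)
    also have "\<dots> = (\<Sum>j<d. (z \<bullet> u j) * (z \<bullet> u j))"
      by (intro sum.cong refl) (metis G1 inner_commute lessThan_iff)
    also have "\<dots> = z \<bullet> z"
    proof -
      have "z \<bullet> z = z \<bullet> (\<Sum>j<d. (z \<bullet> u j) *\<^sub>R u j)" using expand[of z] by simp
      then show ?thesis by (simp add: inner_sum_right)
    qed
    finally show ?thesis by (simp add: norm_eq_sqrt_inner)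
  qed
  have "g x - g y = g (x - y)" for x y
    by (simp add: g_def inner_diff_left scaleR_diff_left sum_subtractf)
  then show "norm (g x - g y) = norm (x - y)" for x y using nz by simp
qed


lemma sum_upd_int:
  fixes v :: "nat \<Rightarrow> 'a::real_vector"
  assumes "j < d"
  shows "(\<Sum>i<d. (of_int ((z(j := z j - q)) i) * s) *\<^sub>R v i)
       = (\<Sum>i<d. (of_int (z i) * s) *\<^sub>R v i) - (of_int q * s) *\<^sub>R v j"
proof -
  have "(\<Sum>i<d. (of_int ((z(j := z j - q)) i) * s) *\<^sub>R v i)
      = (\<Sum>i<d. (of_int (z i) * s) *\<^sub>R v i - (if i = j then (of_int q * s) *\<^sub>R v j else 0))"
    by (intro sum.cong) (auto simp: algebra_simps)
  also have "\<dots> = (\<Sum>i<d. (of_int (z i) * s) *\<^sub>R v i) - (of_int q * s) *\<^sub>R v j"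
    using assms by (simp add: sum_subtractf)
  finally show ?thesis .
qed

lemma reduce:
  fixes v u :: "nat \<Rightarrow> 'a::euclidean_space" and a :: "nat \<Rightarrow> real"
  assumes tri: "\<And>i j. i < j \<Longrightarrow> j < d \<Longrightarrow> v i \<bullet> u j = 0"
    and diag: "\<And>i. i < d \<Longrightarrow> v i \<bullet> u i = a i"
    and apos: "\<And>i. i < d \<Longrightarrow> a i > 0" and s: "s > 0"
  shows "\<exists>z::nat\<Rightarrow>int. \<forall>l<d. 0 \<le> (y + (\<Sum>i<d. (of_int (z i) * s) *\<^sub>R v i)) \<bullet> u l
             \<and> (y + (\<Sum>i<d. (of_int (z i) * s) *\<^sub>R v i)) \<bullet> u l < s * a l"
proof -
  let ?S = "\<lambda>z::nat\<Rightarrow>int. y + (\<Sum>i<d. (of_int (z i) * s) *\<^sub>R v i)"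
  have "\<exists>z::nat\<Rightarrow>int. \<forall>l. d - n \<le> l \<longrightarrow> l < d \<longrightarrow> 0 \<le> ?S z \<bullet> u l \<and> ?S z \<bullet> u l < s * a l" for n
  proof (induction n)
    case 0 then show ?case by auto
  next
    case (Suc n)
    then obtain z where z: "\<forall>l. d - n \<le> l \<longrightarrow> l < d \<longrightarrow> 0 \<le> ?S z \<bullet> u l \<and> ?S z \<bullet> u l < s * a l" by blast
    show ?case
    proof (cases "n < d")
      case False
      then have dd: "d - Suc n = d - n" by simp
      show ?thesis unfolding dd using z by blast
    next
      case True
      define j where "j = d - Suc n"
      have j: "j < d" "d - n = Suc j" using True by (auto simp: j_def)
      define c where "c = ?S z \<bullet> u j"
      define q where "q = \<lfloor>c / (s * a j)\<rfloor>"
      define z' where "z' = z(j := z j - q)"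
      have sa: "s * a j > 0" using s apos[OF j(1)] by simp
      have Sz': "?S z' = ?S z - (of_int q * s) *\<^sub>R v j"
        unfolding z'_def using sum_upd_int[OF j(1), of z q s v] by simp
      have "\<forall>l. d - Suc n \<le> l \<longrightarrow> l < d \<longrightarrow> 0 \<le> ?S z' \<bullet> u l \<and> ?S z' \<bullet> u l < s * a l"
      proof (intro allI impI)
        fix l assume l: "d - Suc n \<le> l" "l < d"
        show "0 \<le> ?S z' \<bullet> u l \<and> ?S z' \<bullet> u l < s * a l"
        proof (cases "l = j")
          case True
          have e: "?S z' \<bullet> u j = c - of_int q * (s * a j)"
            by (simp add: Sz' inner_diff_left c_def diag[OF j(1)])
          have f1: "of_int q \<le> c / (s * a j)" unfolding q_def by (rule of_int_floor_le)
          have f2: "c / (s * a j) < of_int q + 1" unfolding q_def by (rule real_of_int_floor_add_one_gt)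
          from f1 sa have "of_int q * (s * a j) \<le> c" by (simp add: le_divide_eq)
          moreover from f2 sa have "c < (of_int q + 1) * (s * a j)" by (simp add: divide_less_eq)
          ultimately show ?thesis using True e by (simp add: algebra_simps)
        next
          case False
          then have "j < l" using l j_def by simp
          then have "?S z' \<bullet> u l = ?S z \<bullet> u l"
            by (simp add: Sz' inner_diff_left tri l(2))
          moreover have "d - n \<le> l" using False l j by simp
          ultimately show ?thesis using z l by simp
        qed
      qed
      then show ?thesis by blast
    qed
  qed
  from this[of d] show ?thesis by simp
qed


lemma basis_coord:
  fixes e :: "nat \<Rightarrow> 'a::euclidean_space"
  assumes e: "bij_betw e {..<d} Basis" and l: "l < d"
  shows "(\<Sum>j<d. c j *\<^sub>R e j) \<bullet> e l = c l"
proof -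
  have "(\<Sum>j<d. c j *\<^sub>R e j) \<bullet> e l = (\<Sum>j<d. c j * (if j = l then 1 else 0))"
    unfolding inner_sum_left
  proof (intro sum.cong refl)
    fix j assume j: "j \<in> {..<d}"
    have "e j \<in> Basis" "e l \<in> Basis" using e j l by (auto simp: bij_betw_def)
    moreover have "e j = e l \<longleftrightarrow> j = l" using e j l by (auto simp: bij_betw_def inj_on_def)
    ultimately show "c j *\<^sub>R e j \<bullet> e l = c j * (if j = l then 1 else 0)" by (simp add: inner_Basis)
  qed
  also have "\<dots> = c l" using l by (simp add: if_distrib cong: if_cong)
  finally show ?thesis .
qed

lemma ball_packing:
  fixes P :: "'a::euclidean_space set" and e :: "nat \<Rightarrow> 'a" and A :: "nat \<Rightarrow> real"
  assumes P: "finite P" and e: "bij_betw e {..<d} Basis" and dd: "d = DIM('a)" and r: "r > 0"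
    and sep: "\<And>p q. p \<in> P \<Longrightarrow> q \<in> P \<Longrightarrow> p \<noteq> q \<Longrightarrow> 2 * r \<le> norm (p - q)"
    and box: "\<And>p l. p \<in> P \<Longrightarrow> l < d \<Longrightarrow> 0 \<le> p \<bullet> e l \<and> p \<bullet> e l \<le> A l"
    and A: "\<And>l. l < d \<Longrightarrow> A l \<ge> 0"
  shows "real (card P) * (unit_ball_vol d * r ^ d) \<le> (\<Prod>l<d. A l + 2 * r)"
proof -
  define lo where "lo = (\<Sum>l<d. (- r) *\<^sub>R e l)"
  define hi where "hi = (\<Sum>l<d. (A l + r) *\<^sub>R e l)"
  have lo: "lo \<bullet> e l = - r" if "l < d" for l unfolding lo_def using basis_coord[OF e that] .
  have hi: "hi \<bullet> e l = A l + r" if "l < d" for l unfolding hi_def using basis_coord[OF e that] .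
  have Bas: "\<exists>l<d. b = e l" if "b \<in> Basis" for b
    using e that by (auto simp: bij_betw_def)
  have sub: "ball p r \<subseteq> cbox lo hi" if p: "p \<in> P" for p
  proof
    fix z assume z: "z \<in> ball p r"
    show "z \<in> cbox lo hi" unfolding mem_box
    proof
      fix b :: 'a assume "b \<in> Basis"
      then obtain l where l: "l < d" "b = e l" using Bas by blast
      have "\<bar>(z - p) \<bullet> e l\<bar> \<le> norm (z - p)" using Basis_le_norm \<open>b \<in> Basis\<close> l by blast
      moreover have "norm (z - p) < r" using z by (simp add: dist_norm norm_minus_commute)
      ultimately show "lo \<bullet> b \<le> z \<bullet> b \<and> z \<bullet> b \<le> hi \<bullet> b"
        using box[OF p l(1)] lo[OF l(1)] hi[OF l(1)] l(2) by (auto simp: inner_diff_left)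
    qed
  qed
  have disj: "disjoint_family_on (\<lambda>p. ball p r) P"
    unfolding disjoint_family_on_def
  proof (intro ballI impI)
    fix p q assume pq: "p \<in> P" "q \<in> P" "p \<noteq> q"
    show "ball p r \<inter> ball q r = {}"
    proof (rule ccontr)
      assume "ball p r \<inter> ball q r \<noteq> {}"
      then obtain z where "dist p z < r" "dist q z < r" by auto
      then have "norm (p - q) < 2 * r"
        by (metis dist_norm dist_triangle_less_add dist_commute mult_2)
      then show False using sep[OF pq] by simp
    qed
  qed
  have "measure lborel (\<Union>p\<in>P. ball p r) = (\<Sum>p\<in>P. measure lborel (ball p r))"
    by (rule measure_finite_Union[OF P _ disj]) (use r in \<open>auto simp: emeasure_ball less_imp_le\<close>)
  also have "\<dots> = real (card P) * (unit_ball_vol d * r ^ d)"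
    using r dd by (simp add: content_ball)
  finally have eq: "measure lborel (\<Union>p\<in>P. ball p r) = real (card P) * (unit_ball_vol d * r ^ d)" .
  have "measure lborel (\<Union>p\<in>P. ball p r) \<le> measure lborel (cbox lo hi)"
    by (rule measure_mono_fmeasurable) (use sub in \<open>auto intro!: borel_open\<close>)
  also have "\<dots> = (\<Prod>b\<in>Basis. (hi - lo) \<bullet> b)"
  proof -
    have "\<forall>b\<in>Basis. lo \<bullet> b \<le> hi \<bullet> b"
    proof
      fix b :: 'a assume "b \<in> Basis"
      then obtain l where l: "l < d" "b = e l" using Bas by blast
      show "lo \<bullet> b \<le> hi \<bullet> b" using lo[OF l(1)] hi[OF l(1)] A[OF l(1)] r l(2) by simp
    qed
    then show ?thesis by (simp add: measure_lborel_cbox_eq)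
  qed
  also have "\<dots> = (\<Prod>l<d. (hi - lo) \<bullet> e l)"
    using prod.reindex_bij_betw[OF e, of "\<lambda>b. (hi - lo) \<bullet> b"] by simp
  also have "\<dots> = (\<Prod>l<d. A l + 2 * r)"
    by (intro prod.cong refl) (simp add: inner_diff_left lo hi)
  finally show ?thesis using eq by simp
qed

lemma indep_coeff:
  fixes v :: "nat \<Rightarrow> 'a::euclidean_space"
  assumes indep: "independent (v ` {..<d})" and inj: "inj_on v {..<d}"
    and s: "(\<Sum>i<d. c i *\<^sub>R v i) = 0" and i: "i < d"
  shows "c i = 0"
proof -
  define w where "w = inv_into {..<d} v"
  have "(\<Sum>x\<in>v ` {..<d}. c (w x) *\<^sub>R x) = (\<Sum>i<d. c (w (v i)) *\<^sub>R v i)"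
    by (rule sum.reindex[OF inj, unfolded comp_def])
  also have "\<dots> = (\<Sum>i<d. c i *\<^sub>R v i)"
    by (intro sum.cong refl) (simp add: w_def inv_into_f_f[OF inj])
  finally have z: "(\<Sum>x\<in>v ` {..<d}. c (w x) *\<^sub>R x) = 0" using s by simp
  have "\<not> (\<exists>x\<in>v ` {..<d}. c (w x) \<noteq> 0)"
    using indep dependent_finite[of "v ` {..<d}"] z by auto
  then have "c (w (v i)) = 0" using i by auto
  then show ?thesis by (simp add: w_def inv_into_f_f[OF inj] i)
qed

lemma lattice_packing:
  fixes v :: "nat \<Rightarrow> 'a::euclidean_space" and L L' R :: "'a set" and K :: nat and m :: real
  assumes dd: "d = DIM('a)" and indep: "independent (v ` {..<d})" and inj: "inj_on v {..<d}"
    and nv: "\<And>i. i < d \<Longrightarrow> norm (v i) = m" and mpos: "m > 0"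
    and minL: "\<And>w. w \<in> L \<Longrightarrow> w \<noteq> 0 \<Longrightarrow> m \<le> norm w"
    and Ladd: "\<And>x y. x \<in> L \<Longrightarrow> y \<in> L \<Longrightarrow> x + y \<in> L"
    and Ldiff: "\<And>x y. x \<in> L \<Longrightarrow> y \<in> L \<Longrightarrow> x - y \<in> L"
    and comb: "\<And>c::nat\<Rightarrow>int. (\<Sum>i<d. of_int (c i) *\<^sub>R v i) \<in> L'"
    and L'L: "L' \<subseteq> L"
    and Rfin: "finite R" and RL: "R \<subseteq> L"
    and Rsep: "\<And>x y. x \<in> R \<Longrightarrow> y \<in> R \<Longrightarrow> x - y \<in> L' \<Longrightarrow> x = y"
    and K: "K \<ge> 1"
  shows "real (card R) * real K ^ d * (unit_ball_vol d * (m/2) ^ d) \<le> ((real K + 1) * m) ^ d"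
proof -
  obtain u a where orth: "\<And>i j. i < d \<Longrightarrow> j < d \<Longrightarrow> u i \<bullet> u j = (if i = j then 1 else 0)"
    and tri: "\<And>i j. i < j \<Longrightarrow> j < d \<Longrightarrow> v i \<bullet> u j = 0"
    and diag: "\<And>i. i < d \<Longrightarrow> v i \<bullet> u i = a i" and apos: "\<And>i. i < d \<Longrightarrow> a i > 0"
    and ale: "\<And>i. i < d \<Longrightarrow> a i \<le> norm (v i)"
    using gram_schmidt_tri[OF indep inj] by blast
  obtain e where e: "bij_betw e {..<d} (Basis :: 'a set)"
    using ex_bij_betw_nat_finite[of "Basis :: 'a set"] dd by (auto simp: atLeast0LessThan)
  define g where "g \<equiv> \<lambda>x. \<Sum>j<d. (x \<bullet> u j) *\<^sub>R e j"
  have gco: "\<And>x l. l < d \<Longrightarrow> g x \<bullet> e l = x \<bullet> u l"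
    and gn: "\<And>x y. norm (g x - g y) = norm (x - y)"
    using frame_iso[OF orth dd e] unfolding g_def by blast+
  have Kpos: "real K > 0" using K by simp
  have red: "\<exists>z::nat\<Rightarrow>int. \<forall>l<d. 0 \<le> (y + (\<Sum>i<d. (of_int (z i) * real K) *\<^sub>R v i)) \<bullet> u l
             \<and> (y + (\<Sum>i<d. (of_int (z i) * real K) *\<^sub>R v i)) \<bullet> u l < real K * a l" for y
    by (rule reduce[OF tri diag apos Kpos])
  define Y where "Y x k = x + (\<Sum>i<d. of_nat (k i) *\<^sub>R v i)" for x and k :: "nat \<Rightarrow> nat"
  define Z where "Z x k = (SOME z::nat\<Rightarrow>int. \<forall>l<d. 0 \<le> (Y x k + (\<Sum>i<d. (of_int (z i) * real K) *\<^sub>R v i)) \<bullet> u l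
             \<and> (Y x k + (\<Sum>i<d. (of_int (z i) * real K) *\<^sub>R v i)) \<bullet> u l < real K * a l)" for x k
  define pt where "pt x k = Y x k + (\<Sum>i<d. (of_int (Z x k i) * real K) *\<^sub>R v i)" for x k
  have ptc: "0 \<le> pt x k \<bullet> u l \<and> pt x k \<bullet> u l < real K * a l" if "l < d" for x k l
  proof -
    have "\<forall>l<d. 0 \<le> pt x k \<bullet> u l \<and> pt x k \<bullet> u l < real K * a l"
      unfolding pt_def Z_def by (rule someI_ex[OF red])
    then show ?thesis using that by blast
  qed
  define C where "C x k i = int (k i) + Z x k i * int K" for x k i
  have ptform: "pt x k = x + (\<Sum>i<d. of_int (C x k i) *\<^sub>R v i)" for x k
    by (simp add: pt_def Y_def C_def scaleR_add_left sum.distrib add.assoc)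
  have ptL: "pt x k \<in> L" if "x \<in> L" for x k
    unfolding ptform using Ladd[OF that] comb L'L by blast
  let ?D = "R \<times> (PiE {..<d} (\<lambda>_. {..<K}))"
  have ptinj: "inj_on (\<lambda>(x,k). pt x k) ?D"
  proof (rule inj_onI, clarify)
    fix x k x' k' assume x: "x \<in> R" "k \<in> PiE {..<d} (\<lambda>_. {..<K})"
      and x': "x' \<in> R" "k' \<in> PiE {..<d} (\<lambda>_. {..<K})" and eq: "pt x k = pt x' k'"
    have "x - x' = (\<Sum>i<d. of_int (C x' k' i - C x k i) *\<^sub>R v i)"
      using eq unfolding ptform by (simp add: algebra_simps sum_subtractf scaleR_diff_left)
    then have "x - x' \<in> L'" using comb[of "\<lambda>i. C x' k' i - C x k i"] by simp
    then have xx: "x = x'" using Rsep x x' by blast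
    then have "(\<Sum>i<d. of_int (C x k i - C x' k' i) *\<^sub>R v i) = 0"
      using eq unfolding ptform by (simp add: sum_subtractf scaleR_diff_left)
    then have c0: "real_of_int (C x k i - C x' k' i) = 0" if "i < d" for i
      by (rule indep_coeff[OF indep inj _ that])
    have "k i = k' i" if i: "i < d" for i
    proof -
      have "int (k i) - int (k' i) = (Z x' k' i - Z x k i) * int K"
      proof -
        have "C x k i = C x' k' i" using c0[OF i] by simp
        then show ?thesis by (simp add: C_def algebra_simps)
      qed
      moreover have "k i < K" "k' i < K" using x(2) x'(2) i by auto
      ultimately show ?thesis
      proof -
        assume h: "int (k i) - int (k' i) = (Z x' k' i - Z x k i) * int K" "k i < K" "k' i < K"
        consider "Z x' k' i - Z x k i = 0" | "Z x' k' i - Z x k i \<ge> 1" | "Z x' k' i - Z x k i \<le> -1" by linarith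
        then show ?thesis
        proof cases
          case 1 then show ?thesis using h by simp
        next
          case 2
          then have "(Z x' k' i - Z x k i) * int K \<ge> int K" using mult_right_mono[OF 2, of "int K"] by simp
          then show ?thesis using h by linarith
        next
          case 3
          then have "(Z x' k' i - Z x k i) * int K \<le> - int K" using mult_right_mono[OF 3, of "int K"] by simp
          then show ?thesis using h by linarith
        qed
      qed
    qed
    then have "k = k'" using x(2) x'(2) by (intro PiE_ext) auto
    then show "x = x' \<and> k = k'" using xx by simp
  qed
  define P where "P = (\<lambda>(x,k). g (pt x k)) ` ?D"
  have ginj: "inj g" using gn by (intro injI) (metis norm_eq_zero right_minus_eq)
  have cardP: "card P = card R * K ^ d"
  proof -
    have "inj_on (\<lambda>(x,k). g (pt x k)) ?D"
    proof -
      have "inj_on (g \<circ> (\<lambda>(x,k). pt x k)) ?D"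
        by (rule comp_inj_on[OF ptinj inj_on_subset[OF ginj subset_UNIV]])
      moreover have "g \<circ> (\<lambda>(x,k). pt x k) = (\<lambda>(x,k). g (pt x k))" by (auto simp: fun_eq_iff)
      ultimately show ?thesis by simp
    qed
    then have "card P = card ?D" unfolding P_def by (rule card_image)
    also have "\<dots> = card R * K ^ d" by (simp add: card_cartesian_product card_PiE)
    finally show ?thesis .
  qed
  have Pfin: "finite P" unfolding P_def using Rfin by (intro finite_imageI finite_cartesian_product finite_PiE) auto
  have pack: "real (card P) * (unit_ball_vol d * (m/2) ^ d) \<le> (\<Prod>l<d. real K * a l + 2 * (m/2))"
  proof (rule ball_packing[OF Pfin e dd])
    show "m / 2 > 0" using mpos by simp
  next
    fix p q assume p: "p \<in> P" and q: "q \<in> P" and pq: "p \<noteq> q"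
    obtain x k where xk: "x \<in> R" "p = g (pt x k)" using p unfolding P_def by auto
    obtain x' k' where xk': "x' \<in> R" "q = g (pt x' k')" using q unfolding P_def by auto
    have "pt x k - pt x' k' \<in> L" using Ldiff ptL RL xk xk' by blast
    moreover have "pt x k - pt x' k' \<noteq> 0" using pq xk xk' by auto
    ultimately have "m \<le> norm (pt x k - pt x' k')" by (rule minL)
    then show "2 * (m / 2) \<le> norm (p - q)" using gn xk xk' by simp
  next
    fix p l assume p: "p \<in> P" and l: "l < d"
    obtain x k where xk: "p = g (pt x k)" using p unfolding P_def by auto
    show "0 \<le> p \<bullet> e l \<and> p \<bullet> e l \<le> real K * a l"
      using ptc[OF l, of x k] gco[OF l] xk by simp
  next
    fix l assume "l < d" then show "0 \<le> real K * a l" using apos[of l] by simp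
  qed
  also have "\<dots> \<le> (\<Prod>l<d. (real K + 1) * m)"
  proof (rule prod_mono)
    fix l assume "l \<in> {..<d}"
    then have l: "l < d" by simp
    have "real K * a l \<le> real K * m" using ale[OF l] nv[OF l] by (simp add: mult_left_mono)
    then show "0 \<le> real K * a l + 2 * (m / 2) \<and> real K * a l + 2 * (m / 2) \<le> (real K + 1) * m"
      using apos[OF l] mpos by (simp add: algebra_simps)
  qed
  also have "\<dots> = ((real K + 1) * m) ^ d" by simp
  finally show ?thesis using cardP by (simp add: mult.assoc)
qed


lemma limit_bound:
  fixes n C :: real
  assumes "\<And>K::nat. K \<ge> 1 \<Longrightarrow> n \<le> C * ((real K + 1) / real K) ^ d"
  shows "n \<le> C"
proof -
  have lim: "(\<lambda>K. C * (1 + inverse (real (Suc K))) ^ d) \<longlonglongrightarrow> C * (1 + 0) ^ d"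
    by (intro tendsto_intros LIMSEQ_inverse_real_of_nat)
  have "n \<le> C * (1 + inverse (real (Suc K))) ^ d" for K
  proof -
    have "(real (Suc K) + 1) / real (Suc K) = 1 + inverse (real (Suc K))"
      by (simp add: field_simps)
    then show ?thesis using assms[of "Suc K"] by simp
  qed
  then show ?thesis using LIMSEQ_le_const[OF lim] by simp
qed

lemma algebra_step:
  fixes n k w m :: real
  assumes k: "k > 0" and w: "w > 0" and m: "m > 0"
    and h: "n * k ^ d * (w * (m/2) ^ d) \<le> ((k + 1) * m) ^ d"
  shows "n \<le> (2 ^ d / w) * ((k + 1) / k) ^ d"
proof -
  have pos: "k ^ d * (w * (m/2) ^ d) > 0" using k w m by simp
  have "(2 ^ d / w) * ((k + 1) / k) ^ d * (k ^ d * (w * (m/2) ^ d)) = (k + 1) ^ d * m ^ d"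
    using k w m by (simp add: power_divide field_simps)
  also have "\<dots> = ((k + 1) * m) ^ d" by (rule power_mult_distrib[symmetric])
  finally have "(2 ^ d / w) * ((k + 1) / k) ^ d * (k ^ d * (w * (m/2) ^ d)) = ((k + 1) * m) ^ d" .
  then have "n * (k ^ d * (w * (m/2) ^ d)) \<le> (2 ^ d / w) * ((k + 1) / k) ^ d * (k ^ d * (w * (m/2) ^ d))"
    using h by (simp add: mult.assoc)
  then show ?thesis by (simp only: mult_le_cancel_right_pos[OF pos])
qed


lemma count_bound:
  fixes L L' R :: "'a::euclidean_space set"
  assumes L: "is_lattice L" and L': "is_lattice L'" and sub: "L' \<subseteq> L"
    and wr: "well_rounded L'" and mv: "min_vecs L' \<subseteq> min_vecs L"
    and Rfin: "finite R" and RL: "R \<subseteq> L"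
    and Rsep: "\<And>x y. x \<in> R \<Longrightarrow> y \<in> R \<Longrightarrow> x - y \<in> L' \<Longrightarrow> x = y"
  shows "real (card R) \<le> 2 ^ DIM('a) / unit_ball_vol (real DIM('a))"
proof -
  define d where "d = DIM('a)"
  obtain B where B: "B \<subseteq> min_vecs L'" "independent B" "min_vecs L' \<subseteq> span B"
    using maximal_independent_subset by blast
  have spanB: "span B = UNIV"
    using wr B(3) unfolding well_rounded_def by (metis span_minimal subspace_span top.extremum_uniqueI)
  have cardB: "card B = d"
    using dim_span_eq_card_independent[OF B(2)] spanB by (simp add: d_def)
  have finB: "finite B" using cardB d_def DIM_positive card.infinite by (metis less_irrefl)
  obtain v where v: "bij_betw v {..<d} B"
    using ex_bij_betw_nat_finite[OF finB] cardB by (auto simp: atLeast0LessThan)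
  have dpos: "0 < d" by (simp add: d_def)
  have vmin: "v i \<in> min_vecs L" "v i \<in> L'" if "i < d" for i
  proof -
    have "v i \<in> B" using v that by (auto simp: bij_betw_def)
    then have "v i \<in> min_vecs L'" using B(1) by blast
    then show "v i \<in> min_vecs L" "v i \<in> L'" using mv by (auto simp: min_vecs_def)
  qed
  define m where "m = norm (v 0)"
  have v0: "v 0 \<in> min_vecs L" using vmin dpos by blast
  have nv: "norm (v i) = m" if "i < d" for i
  proof -
    from vmin(1)[OF that] v0 have "norm (v i) \<le> norm (v 0)" "norm (v 0) \<le> norm (v i)"
      unfolding min_vecs_def by auto
    then show ?thesis by (simp add: m_def)
  qed
  have mpos: "m > 0" using v0 unfolding min_vecs_def m_def by auto
  have minL: "m \<le> norm w" if "w \<in> L" "w \<noteq> 0" for w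
    using v0 that unfolding min_vecs_def m_def by auto
  have indep: "independent (v ` {..<d})" using v B(2) by (simp add: bij_betw_def)
  have inj: "inj_on v {..<d}" using v by (simp add: bij_betw_def)
  have comb: "(\<Sum>i<d. of_int (c i) *\<^sub>R v i) \<in> L'" for c :: "nat \<Rightarrow> int"
    by (rule lattice_sum[OF L']) (auto intro: lattice_scale[OF L'] vmin(2))
  have "real (card R) \<le> (2 ^ d / unit_ball_vol d) * ((real K + 1) / real K) ^ d" if K: "K \<ge> 1" for K :: nat
  proof (rule algebra_step)
    show "real K > 0" using K by simp
    show "unit_ball_vol (real d) > 0" by simp
    show "m > 0" by (rule mpos)
    show "real (card R) * real K ^ d * (unit_ball_vol (real d) * (m / 2) ^ d) \<le> ((real K + 1) * m) ^ d"
      by (rule lattice_packing[OF d_def indep inj nv mpos minL lattice_add[OF L] lattice_diff[OF L]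
            comb sub Rfin RL Rsep K])
  qed
  then have "real (card R) \<le> 2 ^ d / unit_ball_vol d" by (rule limit_bound)
  then show ?thesis by (simp add: d_def)
qed


lemma coset_eq:
  assumes L': "is_lattice L'" and xy: "x - y \<in> L'"
  shows "(\<lambda>z. x + z) ` L' = (\<lambda>z. y + z) ` L'"
proof
  show "(\<lambda>z. x + z) ` L' \<subseteq> (\<lambda>z. y + z) ` L'"
  proof
    fix w assume "w \<in> (\<lambda>z. x + z) ` L'"
    then obtain l where l: "l \<in> L'" "w = x + l" by auto
    have "(x - y) + l \<in> L'" by (rule lattice_add[OF L' xy l(1)])
    moreover have "w = y + ((x - y) + l)" using l by simp
    ultimately show "w \<in> (\<lambda>z. y + z) ` L'" by blast
  qed
next
  show "(\<lambda>z. y + z) ` L' \<subseteq> (\<lambda>z. x + z) ` L'"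
  proof
    fix w assume "w \<in> (\<lambda>z. y + z) ` L'"
    then obtain l where l: "l \<in> L'" "w = y + l" by auto
    have "l - (x - y) \<in> L'" by (rule lattice_diff[OF L' l(1) xy])
    moreover have "w = x + (l - (x - y))" using l by simp
    ultimately show "w \<in> (\<lambda>z. x + z) ` L'" by blast
  qed
qed

lemma index_bound:
  fixes L L' :: "'a::euclidean_space set"
  assumes L: "is_lattice L" and L': "is_lattice L'" and sub: "L' \<subseteq> L"
    and wr: "well_rounded L'" and mv: "min_vecs L' \<subseteq> min_vecs L"
  shows "real (lattice_index L L') \<le> 2 ^ DIM('a) / unit_ball_vol (real DIM('a))"
proof -
  define S where "S = (\<lambda>x. (\<lambda>y. x + y) ` L') ` L"
  have C0: "0 \<le> 2 ^ DIM('a) / unit_ball_vol (real DIM('a))" by simp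
  show ?thesis
  proof (cases "finite S")
    case False
    then show ?thesis using C0 by (simp add: lattice_index_def S_def[symmetric])
  next
    case True
    define rep where "rep c = (SOME x. x \<in> L \<and> c = (\<lambda>y. x + y) ` L')" for c
    have rep: "rep c \<in> L \<and> c = (\<lambda>y. rep c + y) ` L'" if "c \<in> S" for c
      unfolding rep_def by (rule someI_ex) (use that in \<open>auto simp: S_def\<close>)
    have inj: "inj_on rep S" by (rule inj_onI) (metis rep)
    define R where "R = rep ` S"
    have "real (card R) \<le> 2 ^ DIM('a) / unit_ball_vol (real DIM('a))"
    proof (rule count_bound[OF L L' sub wr mv])
      show "finite R" using True by (simp add: R_def)
      show "R \<subseteq> L" using rep by (auto simp: R_def)
      fix x y assume "x \<in> R" "y \<in> R" "x - y \<in> L'"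
      then obtain c c' where c: "c \<in> S" "c' \<in> S" "x = rep c" "y = rep c'" "x - y \<in> L'"
        by (auto simp: R_def)
      then have "c = c'" using rep[OF c(1)] rep[OF c(2)] coset_eq[OF L'] by metis
      then show "x = y" using c by simp
    qed
    moreover have "card R = card S" unfolding R_def by (rule card_image[OF inj])
    ultimately show ?thesis by (simp add: lattice_index_def S_def)
  qed
qed

lemma const_eq:
  fixes d :: nat
  shows "2 ^ d / unit_ball_vol (real d) = (4 / pi) powr (real d / 2) * Gamma (real d / 2 + 1)"
proof -
  have "(4::real) powr (real d / 2) = (2 powr 2) powr (real d / 2)" by simp
  also have "\<dots> = 2 powr (real d)" by (simp add: powr_powr)
  also have "\<dots> = 2 ^ d" by (simp add: powr_realpow)
  finally have f: "(4::real) powr (real d / 2) = 2 ^ d" .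
  have "(4 / pi) powr (real d / 2) = 4 powr (real d / 2) / pi powr (real d / 2)"
    by (rule powr_divide)
  then show ?thesis using f by (simp add: unit_ball_vol_def)
qed

theorem proposition8p2:
  shows "I_bound TYPE('a::euclidean_space) \<le>
    enat (nat \<lfloor>(4 / pi) powr (real DIM('a) / 2) * Gamma (real DIM('a) / 2 + 1)\<rfloor>)"
  unfolding I_bound_def
proof (rule Sup_least, clarify)
  fix L L' :: "'a set"
  assume a: "is_lattice L" "is_lattice L'" "L' \<subseteq> L" "well_rounded L'" "min_vecs L' \<subseteq> min_vecs L"
  let ?C = "(4 / pi) powr (real DIM('a) / 2) * Gamma (real DIM('a) / 2 + 1)"
  have "real (lattice_index L L') \<le> ?C"
    using index_bound[OF a] const_eq[of "DIM('a)"] by simp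
  then have "int (lattice_index L L') \<le> \<lfloor>?C\<rfloor>" by (simp add: le_floor_iff)
  then have "lattice_index L L' \<le> nat \<lfloor>?C\<rfloor>" by linarith
  then show "enat (lattice_index L L') \<le> enat (nat \<lfloor>?C\<rfloor>)" by simp
qed

end
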